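(* In the triangle $ABC$ with $a=\sqrt{2-\sqrt2}$ and $b=c=1$, the triangle center $X_{26}$ coincides with vertex $A$.
   Context: $X_n$ denotes the $n$-th triangle center listed in Kimberling's Encyclopedia of Triangle Centers (ETC), given by barycentric coordinates in terms of $a=BC$, $b=CA$, $c=AB$. *)

theory Defs
  imports Complex_Main
begin

(* Angle at the vertex opposite side x, in a triangle with sides x, y, z (law of cosines). *)
definition cos_opp :: "real \<Rightarrow> real \<Rightarrow> real \<Rightarrow> real" where
  "cos_opp x y z = (y^2 + z^2 - x^2) / (2 * y * z)"

definition cos2_opp :: "real \<Rightarrow> real \<Rightarrow> real \<Rightarrow> real" where
  "cos2_opp x y z = 2 * (cos_opp x y z)^2 - 1"

(* First barycentric coordinate of X(26) (ETC):
   a^2 (b^2 cos 2B + c^2 cos 2C - a^2 cos 2A) *)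
definition x26_f :: "real \<Rightarrow> real \<Rightarrow> real \<Rightarrow> real" where
  "x26_f a b c = a^2 * (b^2 * cos2_opp b c a + c^2 * cos2_opp c a b - a^2 * cos2_opp a b c)"

definition X26_bary :: "real \<Rightarrow> real \<Rightarrow> real \<Rightarrow> real \<times> real \<times> real" where
  "X26_bary a b c = (x26_f a b c, x26_f b c a, x26_f c a b)"

definition normalize_bary :: "real \<times> real \<times> real \<Rightarrow> real \<times> real \<times> real" where
  "normalize_bary p = (case p of (u, v, w) \<Rightarrow> (u / (u+v+w), v / (u+v+w), w / (u+v+w)))"

end

theory Submission
  imports Defs
begin

theorem theorem3p7:
  fixes a b c :: real
  assumes "a = sqrt (2 - sqrt 2)" and "b = 1" and "c = 1"
  shows "normalize_bary (X26_bary a b c) = (1, 0, 0)"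
proof -
  have r2: "sqrt 2 ^ 2 = (2::real)" by simp
  have rlt: "sqrt 2 < (2::real)" by (smt (verit) real_sqrt_less_iff real_sqrt_four)
  have a2: "a^2 = 2 - sqrt 2" using assms(1) rlt by simp
  have apos: "a > 0" using assms(1) rlt by simp
  have cA: "cos_opp a b c = sqrt 2 / 2" using assms a2 by (simp add: cos_opp_def)
  have c2A: "cos2_opp a b c = 0" unfolding cos2_opp_def cA by (simp add: power_divide)
  have cB: "cos_opp b c a = a / 2" using assms(2,3) apos by (simp add: cos_opp_def power2_eq_square)
  have cC: "cos_opp c a b = a / 2" using assms(2,3) apos by (simp add: cos_opp_def power2_eq_square)
  have c2B: "cos2_opp b c a = - sqrt 2 / 2" unfolding cos2_opp_def cB by (simp add: power_divide a2 field_simps)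
  have c2C: "cos2_opp c a b = - sqrt 2 / 2" unfolding cos2_opp_def cC by (simp add: power_divide a2 field_simps)
  have f1: "x26_f a b c = (2 - sqrt 2) * (- sqrt 2)"
    using a2 c2A c2B c2C assms(2,3) by (simp add: x26_f_def)
  have f2: "x26_f b c a = 0"
    using c2A c2B c2C assms(2,3) by (simp add: x26_f_def)
  have f3: "x26_f c a b = 0"
    using c2A c2B c2C assms(2,3) by (simp add: x26_f_def)
  have nz: "(2 - sqrt 2) * (- sqrt 2) \<noteq> (0::real)" using rlt by simp
  show ?thesis using f1 f2 f3 nz by (simp add: X26_bary_def normalize_bary_def)
qed

end
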